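(* Let $X$ and $Y$ be Banach spaces and $T\in B(X)$, $S\in B(Y)$ operators with $I_T=I_S$. Then there exist constants $M>0$ and $m\in\mathbb N$ such that for every $s$-function $s$, $$s_{m(n-1)+j}(T)\le M s_n(S)\quad\text{and}\quad s_{m(n-1)+j}(S)\le M s_n(T)$$ for all $n\in\mathbb N$ and all $j\in\{0,\ldots,m-1\}$ with $m(n-1)+j\ge 1$.
   Context: All Banach spaces are complex; $B(X,Y)$ denotes bounded linear operators. For $T\in B(X,Y)$ and Banach spaces $Z_1,Z_2$, $I_T(Z_1,Z_2)=\bigcup_{n\in\mathbb N}\{\sum_{j=1}^n R_jTR_j' : R_j\in B(Y,Z_2),\ R_j'\in B(Z_1,X)\}$ and $I_T=\bigcup_{Z_1,Z_2}I_T(Z_1,Z_2)$; $I_T=I_S$ means $I_T(Z_1,Z_2)=I_S(Z_1,Z_2)$ for all $Z_1,Z_2$. An $s$-function is a rule assigning to every operator $T\in B(X,Y)$ (for all Banach spaces $X,Y$) a sequence $(s_n(T))_{n\ge1}$ such that: (1) $\|T\|=s_1(T)\ge s_2(T)\ge\cdots\ge0$; (2) $s_{n+m-1}(S+T)\le s_n(S)+s_m(T)$ for all $m,n$ and $S,T\in B(X,Y)$; (3) $s_n(STR)\le\|S\|\|R\|s_n(T)$ for $T\in B(X,Y)$, $S\in B(Y,Z_2)$, $R\in B(Z_1,X)$; (4) $s_n(T)=0$ if $\mathrm{rank}\,T<n$; (5) $s_n(\mathrm{id}_{\ell^2_n})=1$, where $\ell^2_n$ is $\mathbb C^n$ with the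 Euclidean norm. *)

theory Defs
  imports "HOL-Analysis.Analysis"
begin

text \<open>The library only has real normed spaces; a complex Banach space is a real
Banach space with a compatible complex scalar multiplication.\<close>

class cbanach = banach +
  fixes scaleC :: "complex \<Rightarrow> 'a \<Rightarrow> 'a"
  assumes scaleC_of_real: "scaleC (of_real r) x = scaleR r x"
    and scaleC_add_right: "scaleC a (x + y) = scaleC a x + scaleC a y"
    and scaleC_add_left: "scaleC (a + b) x = scaleC a x + scaleC b x"
    and scaleC_scaleC: "scaleC a (scaleC b x) = scaleC (a * b) x"
    and scaleC_one: "scaleC 1 x = x"
    and norm_scaleC: "norm (scaleC a x) = cmod a * norm x"

definition bounded_clinear :: "('a::cbanach \<Rightarrow> 'b::cbanach) \<Rightarrow> bool" where
  "bounded_clinear f \<longleftrightarrow> bounded_linear f \<and> (\<forall>c x. f (scaleC c x) = scaleC c (f x))"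

definition cspan :: "'a::cbanach set \<Rightarrow> 'a set" where
  "cspan B = {(\<Sum>b\<in>F. scaleC (c b) b) | F c. finite F \<and> F \<subseteq> B}"

definition rank_less :: "('a::cbanach \<Rightarrow> 'b::cbanach) \<Rightarrow> nat \<Rightarrow> bool" where
  "rank_less T n \<longleftrightarrow> (\<exists>B. finite B \<and> card B < n \<and> range T \<subseteq> cspan B)"

definition opideal :: "('x::cbanach \<Rightarrow> 'y::cbanach) \<Rightarrow> ('z1::cbanach \<Rightarrow> 'z2::cbanach) set" where
  "opideal T = {(\<lambda>z. \<Sum>j<k. R j (T (R' j z))) | k R R'.
      1 \<le> (k::nat) \<and> (\<forall>j<k. bounded_clinear (R j) \<and> bounded_clinear (R' j))}"

definition sfun_single :: "(('x::cbanach \<Rightarrow> 'y::cbanach) \<Rightarrow> nat \<Rightarrow> real) \<Rightarrow> bool" where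
  "sfun_single s \<longleftrightarrow>
     (\<forall>T. bounded_clinear T \<longrightarrow>
        s T 1 = onorm T \<and> (\<forall>n\<ge>1. s T (Suc n) \<le> s T n) \<and> (\<forall>n\<ge>1. 0 \<le> s T n)
        \<and> (\<forall>n\<ge>1. rank_less T n \<longrightarrow> s T n = 0))
   \<and> (\<forall>S T n m. bounded_clinear S \<and> bounded_clinear T \<and> 1 \<le> n \<and> 1 \<le> m \<longrightarrow>
        s (\<lambda>x. S x + T x) (n + m - 1) \<le> s S n + s T m)"

text \<open>Axiom (3): s_n(S T R) \<le> \<parallel>S\<parallel> \<parallel>R\<parallel> s_n(T), for T in B(X,Y), R in B(Z1,X), S in B(Y,Z2);
here s is the s-function on B(X,Y) and s' the one on B(Z1,Z2).\<close>

definition sfun_comp ::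
  "(('x::cbanach \<Rightarrow> 'y::cbanach) \<Rightarrow> nat \<Rightarrow> real) \<Rightarrow> (('z1::cbanach \<Rightarrow> 'z2::cbanach) \<Rightarrow> nat \<Rightarrow> real) \<Rightarrow> bool" where
  "sfun_comp s s' \<longleftrightarrow>
     (\<forall>T (R :: 'z1 \<Rightarrow> 'x) (S :: 'y \<Rightarrow> 'z2) n.
        bounded_clinear T \<and> bounded_clinear R \<and> bounded_clinear S \<and> 1 \<le> n \<longrightarrow>
        s' (S \<circ> T \<circ> R) n \<le> onorm S * onorm R * s T n)"

text \<open>An s-function restricted to the four operator spaces B(X,X), B(X,Y), B(Y,X), B(Y,Y):
axioms (1),(2),(4) on each, and axiom (3) for all Z1, Z2, X', Y' among X, Y.\<close>

definition sfun2 ::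
  "(('a::cbanach \<Rightarrow> 'a) \<Rightarrow> nat \<Rightarrow> real) \<Rightarrow> (('a \<Rightarrow> 'b::cbanach) \<Rightarrow> nat \<Rightarrow> real) \<Rightarrow>
   (('b \<Rightarrow> 'a) \<Rightarrow> nat \<Rightarrow> real) \<Rightarrow> (('b \<Rightarrow> 'b) \<Rightarrow> nat \<Rightarrow> real) \<Rightarrow> bool" where
  "sfun2 sXX sXY sYX sYY \<longleftrightarrow>
     sfun_single sXX \<and> sfun_single sXY \<and> sfun_single sYX \<and> sfun_single sYY \<and>
     sfun_comp sXX sXX \<and> sfun_comp sXX sXY \<and> sfun_comp sXX sYX \<and> sfun_comp sXX sYY \<and>
     sfun_comp sXY sXX \<and> sfun_comp sXY sXY \<and> sfun_comp sXY sYX \<and> sfun_comp sXY sYY \<and>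
     sfun_comp sYX sXX \<and> sfun_comp sYX sXY \<and> sfun_comp sYX sYX \<and> sfun_comp sYX sYY \<and>
     sfun_comp sYY sXX \<and> sfun_comp sYY sXY \<and> sfun_comp sYY sYX \<and> sfun_comp sYY sYY"

end

theory Submission
  imports Defs
begin

lemma bc_add: "bounded_clinear f \<Longrightarrow> bounded_clinear g \<Longrightarrow> bounded_clinear (\<lambda>x. f x + g x)"
  unfolding bounded_clinear_def by (auto intro: bounded_linear_add simp: scaleC_add_right)

lemma bc_comp: "bounded_clinear f \<Longrightarrow> bounded_clinear g \<Longrightarrow> bounded_clinear (f \<circ> g)"
  unfolding bounded_clinear_def by (auto simp: o_def intro: bounded_linear_compose)

lemma bc_id: "bounded_clinear (id :: 'a::cbanach \<Rightarrow> 'a)"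
  unfolding bounded_clinear_def by (simp add: bounded_linear_ident id_def)

lemma bc_sum: "(\<forall>j<Suc k. bounded_clinear (A j)) \<Longrightarrow> bounded_clinear (\<lambda>z. \<Sum>j<Suc k. A j z)"
proof (induction k)
  case 0 then show ?case by simp
next
  case (Suc k)
  have e: "(\<lambda>z. \<Sum>j<Suc (Suc k). A j z) = (\<lambda>z. (\<Sum>j<Suc k. A j z) + A (Suc k) z)" by simp
  show ?case unfolding e using Suc by (intro bc_add) auto
qed

lemma s_mono: assumes "sfun_single s" "bounded_clinear A" "1 \<le> p" "p \<le> q"
  shows "s A q \<le> s A p"
  using assms(4)
proof (induction q rule: dec_induct)
  case base then show ?case by simp
next
  case (step q)
  have "s A (Suc q) \<le> s A q" using assms(1,2,3) step(1) unfolding sfun_single_def by auto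
  then show ?case using step by linarith
qed

lemma s_sum: assumes "sfun_single s" "\<forall>j<Suc k. bounded_clinear (A j)" "1 \<le> n"
  shows "s (\<lambda>z. \<Sum>j<Suc k. A j z) (Suc k * (n - 1) + 1) \<le> (\<Sum>j<Suc k. s (A j) n)"
  using assms(2)
proof (induction k)
  case 0
  have e: "(\<lambda>z. \<Sum>j<Suc 0. A j z) = A 0" by simp
  show ?case unfolding e using assms(3) by simp
next
  case (Suc k)
  have e: "(\<lambda>z. \<Sum>j<Suc (Suc k). A j z) = (\<lambda>z. (\<lambda>z. \<Sum>j<Suc k. A j z) z + A (Suc k) z)" by simp
  have i: "Suc (Suc k) * (n - 1) + 1 = (Suc k * (n - 1) + 1) + n - 1" using assms(3) by simp
  have "s (\<lambda>z. \<Sum>j<Suc (Suc k). A j z) (Suc (Suc k) * (n - 1) + 1)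
     \<le> s (\<lambda>z. \<Sum>j<Suc k. A j z) (Suc k * (n - 1) + 1) + s (A (Suc k)) n"
  proof -
    have add: "\<And>F G p q. bounded_clinear F \<Longrightarrow> bounded_clinear G \<Longrightarrow> 1 \<le> p \<Longrightarrow> 1 \<le> q
        \<Longrightarrow> s (\<lambda>x. F x + G x) (p + q - 1) \<le> s F p + s G q"
      using assms(1) unfolding sfun_single_def by blast
    have b1: "bounded_clinear (\<lambda>z. \<Sum>j<Suc k. A j z)" using bc_sum[of k A] Suc.prems by simp
    have b2: "bounded_clinear (A (Suc k))" using Suc.prems by simp
    show ?thesis unfolding i
      using add[OF b1 b2, of "Suc k * (n - 1) + 1" n] assms(3) by simp
  qed
  also have "\<dots> \<le> (\<Sum>j<Suc k. s (A j) n) + s (A (Suc k)) n" using Suc by simp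
  finally show ?case by simp
qed

lemma one_dir:
  fixes T :: "'x::cbanach \<Rightarrow> 'y::cbanach" and S :: "'z1::cbanach \<Rightarrow> 'z2::cbanach"
  assumes bT: "bounded_clinear T"
    and S: "S \<in> opideal T"
  shows "\<exists>C\<ge>0. \<exists>k\<ge>1. \<forall>s (s' :: ('z1 \<Rightarrow> 'z2) \<Rightarrow> nat \<Rightarrow> real). sfun_single s' \<and> sfun_comp s s' \<longrightarrow>
     (\<forall>n\<ge>1. s' S (k * (n - 1) + 1) \<le> C * s T n)"
proof -
  obtain k R R' where Sd: "S = (\<lambda>z. \<Sum>j<k. R j (T (R' j z)))" and k: "1 \<le> (k::nat)"
    and bR: "\<forall>j<k. bounded_clinear (R j) \<and> bounded_clinear (R' j)"
  proof -
    have "\<exists>k R R'. S = (\<lambda>z. \<Sum>j<k. R j (T (R' j z))) \<and> 1 \<le> (k::nat) \<and>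
       (\<forall>j<k. bounded_clinear (R j :: 'y \<Rightarrow> 'z2) \<and> bounded_clinear (R' j :: 'z1 \<Rightarrow> 'x))"
      using S unfolding opideal_def by simp
    then show ?thesis using that by blast
  qed
  obtain k0 where k0: "k = Suc k0" using k by (cases k) auto
  define C where "C = (\<Sum>j<k. onorm (R j) * onorm (R' j))"
  have C0: "C \<ge> 0" unfolding C_def using bR
    by (intro sum_nonneg) (auto intro!: mult_nonneg_nonneg onorm_pos_le simp: bounded_clinear_def)
  have "\<forall>s (s' :: ('z1 \<Rightarrow> 'z2) \<Rightarrow> nat \<Rightarrow> real). sfun_single s' \<and> sfun_comp s s' \<longrightarrow>
     (\<forall>n\<ge>1. s' S (k * (n - 1) + 1) \<le> C * s T n)"
  proof (intro allI impI)
    fix s :: "('x \<Rightarrow> 'y) \<Rightarrow> nat \<Rightarrow> real" and s' :: "('z1 \<Rightarrow> 'z2) \<Rightarrow> nat \<Rightarrow> real" and n :: nat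
    assume ss: "sfun_single s' \<and> sfun_comp s s'" and n: "1 \<le> n"
    define A where "A j = R j \<circ> T \<circ> R' j" for j
    have Se: "S = (\<lambda>z. \<Sum>j<Suc k0. A j z)" unfolding Sd A_def k0 by simp
    have bA: "\<forall>j<Suc k0. bounded_clinear (A j)" unfolding A_def using bR bT k0
      by (auto intro!: bc_comp)
    have "s' S (k * (n - 1) + 1) \<le> (\<Sum>j<Suc k0. s' (A j) n)"
      unfolding Se k0 using s_sum[OF _ bA n] ss by blast
    also have "\<dots> \<le> (\<Sum>j<Suc k0. onorm (R j) * onorm (R' j) * s T n)"
    proof (rule sum_mono)
      fix j assume "j \<in> {..<Suc k0}"
      then show "s' (A j) n \<le> onorm (R j) * onorm (R' j) * s T n"
        using ss bR bT n k0 unfolding sfun_comp_def A_def by auto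
    qed
    also have "\<dots> = C * s T n" unfolding C_def k0 by (simp only: sum_distrib_right)
    finally show "s' S (k * (n - 1) + 1) \<le> C * s T n" .
  qed
  then show ?thesis using C0 k by blast
qed

lemma self_in: "bounded_clinear (S :: 'a::cbanach \<Rightarrow> 'b::cbanach) \<Longrightarrow> S \<in> opideal S"
proof -
  assume "bounded_clinear S"
  have "\<exists>k R R'. S = (\<lambda>z. \<Sum>j<k. R j (S (R' j z))) \<and> 1 \<le> (k::nat) \<and>
       (\<forall>j<k. bounded_clinear (R j :: 'b \<Rightarrow> 'b) \<and> bounded_clinear (R' j :: 'a \<Rightarrow> 'a))"
    by (rule exI[of _ 1], rule exI[of _ "\<lambda>_. id"], rule exI[of _ "\<lambda>_. id"]) (simp add: bc_id)
  then show ?thesis unfolding opideal_def by simp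
qed

theorem proposition3p2:
  fixes T :: "'a::cbanach \<Rightarrow> 'a" and S :: "'b::cbanach \<Rightarrow> 'b"
  assumes "bounded_clinear T" and "bounded_clinear S"
    and "(opideal T :: ('a \<Rightarrow> 'a) set) = opideal S"
    and "(opideal T :: ('a \<Rightarrow> 'b) set) = opideal S"
    and "(opideal T :: ('b \<Rightarrow> 'a) set) = opideal S"
    and "(opideal T :: ('b \<Rightarrow> 'b) set) = opideal S"
  shows "\<exists>M>0. \<exists>m::nat. 1 \<le> m \<and>
    (\<forall>(sXX :: ('a \<Rightarrow> 'a) \<Rightarrow> nat \<Rightarrow> real) (sXY :: ('a \<Rightarrow> 'b) \<Rightarrow> nat \<Rightarrow> real)
       (sYX :: ('b \<Rightarrow> 'a) \<Rightarrow> nat \<Rightarrow> real) (sYY :: ('b \<Rightarrow> 'b) \<Rightarrow> nat \<Rightarrow> real).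
       sfun2 sXX sXY sYX sYY \<longrightarrow>
       (\<forall>n\<ge>1. \<forall>j<m. 1 \<le> m * (n - 1) + j \<longrightarrow>
          sXX T (m * (n - 1) + j) \<le> M * sYY S n \<and>
          sYY S (m * (n - 1) + j) \<le> M * sXX T n))"
proof -
  have S1: "S \<in> (opideal T :: ('b \<Rightarrow> 'b) set)" using self_in[OF assms(2)] assms(6) by simp
  have T1: "T \<in> (opideal S :: ('a \<Rightarrow> 'a) set)" using self_in[OF assms(1)] assms(3) by simp
  obtain C1 k1 where C1: "C1 \<ge> 0" "k1 \<ge> 1" and H1: "\<forall>s (s' :: ('b \<Rightarrow> 'b) \<Rightarrow> nat \<Rightarrow> real).
     sfun_single s' \<and> sfun_comp s s' \<longrightarrow> (\<forall>n\<ge>1. s' S (k1 * (n - 1) + 1) \<le> C1 * s T n)"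
    using one_dir[OF assms(1) S1] by blast
  obtain C2 k2 where C2: "C2 \<ge> 0" "k2 \<ge> 1" and H2: "\<forall>s (s' :: ('a \<Rightarrow> 'a) \<Rightarrow> nat \<Rightarrow> real).
     sfun_single s' \<and> sfun_comp s s' \<longrightarrow> (\<forall>n\<ge>1. s' T (k2 * (n - 1) + 1) \<le> C2 * s S n)"
    using one_dir[OF assms(2) T1] by blast
  define m where "m = max k1 k2 + 1"
  define M where "M = C1 + C2 + 1"
  have idx: "k * (n - 1) + 1 \<le> m * (n - 1) + j" if "k \<le> max k1 k2" "1 \<le> m * (n - 1) + j" "n \<ge> 1"
    for k n j
  proof (cases "n = 1")
    case True then show ?thesis using that by simp
  next
    case False
    then have "n - 1 \<ge> 1" using that by simp
    have "k * (n - 1) + 1 \<le> (k + 1) * (n - 1)" using \<open>n - 1 \<ge> 1\<close> by simp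
    also have "\<dots> \<le> m * (n - 1)" unfolding m_def using that by (intro mult_right_mono) auto
    finally show ?thesis by simp
  qed
  have "\<forall>(sXX :: ('a \<Rightarrow> 'a) \<Rightarrow> nat \<Rightarrow> real) (sXY :: ('a \<Rightarrow> 'b) \<Rightarrow> nat \<Rightarrow> real)
       (sYX :: ('b \<Rightarrow> 'a) \<Rightarrow> nat \<Rightarrow> real) (sYY :: ('b \<Rightarrow> 'b) \<Rightarrow> nat \<Rightarrow> real).
       sfun2 sXX sXY sYX sYY \<longrightarrow>
       (\<forall>n\<ge>1. \<forall>j<m. 1 \<le> m * (n - 1) + j \<longrightarrow>
          sXX T (m * (n - 1) + j) \<le> M * sYY S n \<and>
          sYY S (m * (n - 1) + j) \<le> M * sXX T n)"
  proof (intro allI impI conjI)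
    fix sXX :: "('a \<Rightarrow> 'a) \<Rightarrow> nat \<Rightarrow> real" and sXY :: "('a \<Rightarrow> 'b) \<Rightarrow> nat \<Rightarrow> real"
      and sYX :: "('b \<Rightarrow> 'a) \<Rightarrow> nat \<Rightarrow> real" and sYY :: "('b \<Rightarrow> 'b) \<Rightarrow> nat \<Rightarrow> real" and n j :: nat
    assume s2: "sfun2 sXX sXY sYX sYY" and n: "1 \<le> n" and j: "j < m" and ij: "1 \<le> m * (n - 1) + j"
    have sX: "sfun_single sXX" and sY: "sfun_single sYY" and c1: "sfun_comp sXX sYY"
      and c2: "sfun_comp sYY sXX" using s2 unfolding sfun2_def by auto
    have pX: "sXX T n \<ge> 0" using sX assms(1) n unfolding sfun_single_def by auto
    have pY: "sYY S n \<ge> 0" using sY assms(2) n unfolding sfun_single_def by auto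
    have "sXX T (m * (n - 1) + j) \<le> sXX T (k2 * (n - 1) + 1)"
      by (rule s_mono[OF sX assms(1)]) (use idx[of k2 n j] ij n in auto)
    also have "\<dots> \<le> C2 * sYY S n" using H2 sX c2 n by blast
    also have "\<dots> \<le> M * sYY S n" unfolding M_def using pY C1 by (intro mult_right_mono) auto
    finally show "sXX T (m * (n - 1) + j) \<le> M * sYY S n" .
    have "sYY S (m * (n - 1) + j) \<le> sYY S (k1 * (n - 1) + 1)"
      by (rule s_mono[OF sY assms(2)]) (use idx[of k1 n j] ij n in auto)
    also have "\<dots> \<le> C1 * sXX T n" using H1 sY c1 n by blast
    also have "\<dots> \<le> M * sXX T n" unfolding M_def using pX C2 by (intro mult_right_mono) auto
    finally show "sYY S (m * (n - 1) + j) \<le> M * sXX T n" .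
  qed
  moreover have "M > 0" "1 \<le> m" unfolding M_def m_def using C1 C2 by auto
  ultimately show ?thesis by blast
qed

end
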